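(* For every round $r$ and every validator $v$, at most one block of round $r$ authored by $v$ has a certificate.
   Context: There are $n=3f+1$ validators, at most $f$ Byzantine; honest validators create exactly one block per round, Byzantine ones may create several blocks in the same round (equivocation). Every valid block of round $r$ has as parents at least $2f+1$ blocks of round $r-1$ from distinct validators. A block $b$ of round $r'$ is a vote for a block $L$ of round $r<r'$ with author $a$ if the first block with author $a$ and round $r$ encountered in the deterministic depth-first search from $b$ along parent references is $L$ (so a block votes for at most one block of a given author and round). For a fixed wave length $w\ge 4$, a block $c$ of round $r+w-1$ is a certificate for a block $L$ of round $r$ if at least $2f+1$ of $c$'s parents (blocks of round $r+w-2$) are votes for $L$; a block "has a certificate" if some such $c$ exists. *)

theory Defs
  imports Main
begin

text \<open>Blocks are elements of an abstract type 'b, with an author (a validator of type 'v),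
a round number, and an ordered list of parent references (the order fixes the
deterministic depth-first search).\<close>

text \<open>Depth-first (pre-order) traversal from a block along parent references; the fuel
argument is the round number, which strictly decreases along parent edges.  In a DAG,
the order of first occurrences in this unfolded traversal coincides with the order in
which a DFS with a visited set first encounters the blocks.\<close>
fun dfs_aux :: "('b \<Rightarrow> 'b list) \<Rightarrow> nat \<Rightarrow> 'b \<Rightarrow> 'b list" where
  "dfs_aux par 0 b = [b]"
| "dfs_aux par (Suc k) b = b # concat (map (dfs_aux par k) (par b))"

definition dfs :: "('b \<Rightarrow> nat) \<Rightarrow> ('b \<Rightarrow> 'b list) \<Rightarrow> 'b \<Rightarrow> 'b list" where
  "dfs rnd par b = dfs_aux par (rnd b) b"

definition valid_dag ::
  "('b \<Rightarrow> 'v) \<Rightarrow> ('b \<Rightarrow> nat) \<Rightarrow> ('b \<Rightarrow> 'b list) \<Rightarrow> 'v set \<Rightarrow> nat \<Rightarrow> 'b set \<Rightarrow> bool" where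
  "valid_dag auth rnd par V f B \<longleftrightarrow>
     (\<forall>b\<in>B. auth b \<in> V
        \<and> set (par b) \<subseteq> B
        \<and> distinct (par b)
        \<and> (\<forall>p\<in>set (par b). rnd p + 1 = rnd b)
        \<and> inj_on auth (set (par b))
        \<and> (0 < rnd b \<longrightarrow> 2 * f + 1 \<le> length (par b)))"

definition is_vote ::
  "('b \<Rightarrow> 'v) \<Rightarrow> ('b \<Rightarrow> nat) \<Rightarrow> ('b \<Rightarrow> 'b list) \<Rightarrow> 'b \<Rightarrow> 'b \<Rightarrow> bool" where
  "is_vote auth rnd par b L \<longleftrightarrow>
     rnd L < rnd b \<and>
     find (\<lambda>x. auth x = auth L \<and> rnd x = rnd L) (dfs rnd par b) = Some L"

definition is_certificate ::
  "('b \<Rightarrow> 'v) \<Rightarrow> ('b \<Rightarrow> nat) \<Rightarrow> ('b \<Rightarrow> 'b list) \<Rightarrow> nat \<Rightarrow> nat \<Rightarrow> 'b \<Rightarrow> 'b \<Rightarrow> bool" where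
  "is_certificate auth rnd par f w c L \<longleftrightarrow>
     rnd c = rnd L + w - 1 \<and>
     2 * f + 1 \<le> card {p \<in> set (par c). is_vote auth rnd par p L}"

definition has_certificate ::
  "('b \<Rightarrow> 'v) \<Rightarrow> ('b \<Rightarrow> nat) \<Rightarrow> ('b \<Rightarrow> 'b list) \<Rightarrow> nat \<Rightarrow> nat \<Rightarrow> 'b set \<Rightarrow> 'b \<Rightarrow> bool" where
  "has_certificate auth rnd par f w B L \<longleftrightarrow> (\<exists>c\<in>B. is_certificate auth rnd par f w c L)"

end

theory Submission
  imports Defs
begin

theorem lemma2:
  fixes auth :: "'b \<Rightarrow> 'v" and rnd :: "'b \<Rightarrow> nat" and par :: "'b \<Rightarrow> 'b list"
    and V Byz :: "'v set" and f w :: nat and B :: "'b set"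
  assumes "finite V" and "card V = 3 * f + 1"
    and "Byz \<subseteq> V" and "card Byz \<le> f"
    and "valid_dag auth rnd par V f B"
    and honest: "\<And>b1 b2. b1 \<in> B \<Longrightarrow> b2 \<in> B \<Longrightarrow> auth b1 \<in> V - Byz \<Longrightarrow>
                   auth b1 = auth b2 \<Longrightarrow> rnd b1 = rnd b2 \<Longrightarrow> b1 = b2"
    and "4 \<le> w"
  shows "\<forall>r v L1 L2. L1 \<in> B \<and> L2 \<in> B \<and> rnd L1 = r \<and> rnd L2 = r \<and> auth L1 = v \<and> auth L2 = v
           \<and> has_certificate auth rnd par f w B L1 \<and> has_certificate auth rnd par f w B L2
           \<longrightarrow> L1 = L2"
proof (intro allI impI)
  fix r v L1 L2
  assume H: "L1 \<in> B \<and> L2 \<in> B \<and> rnd L1 = r \<and> rnd L2 = r \<and> auth L1 = v \<and> auth L2 = v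
           \<and> has_certificate auth rnd par f w B L1 \<and> has_certificate auth rnd par f w B L2"
  obtain c1 where c1: "c1 \<in> B" "is_certificate auth rnd par f w c1 L1"
    using H unfolding has_certificate_def by blast
  obtain c2 where c2: "c2 \<in> B" "is_certificate auth rnd par f w c2 L2"
    using H unfolding has_certificate_def by blast
  define P1 where "P1 = {p \<in> set (par c1). is_vote auth rnd par p L1}"
  define P2 where "P2 = {p \<in> set (par c2). is_vote auth rnd par p L2}"
  have dag1: "set (par c1) \<subseteq> B" "inj_on auth (set (par c1))" "\<forall>p\<in>set (par c1). rnd p + 1 = rnd c1"
    using assms(5) c1(1) unfolding valid_dag_def by blast+
  have dag2: "set (par c2) \<subseteq> B" "inj_on auth (set (par c2))" "\<forall>p\<in>set (par c2). rnd p + 1 = rnd c2"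
    using assms(5) c2(1) unfolding valid_dag_def by blast+
  have cardP1: "2 * f + 1 \<le> card P1" using c1(2) unfolding is_certificate_def P1_def by blast
  have cardP2: "2 * f + 1 \<le> card P2" using c2(2) unfolding is_certificate_def P2_def by blast
  have rc: "rnd c1 = rnd c2" using c1(2) c2(2) H unfolding is_certificate_def by simp
  define S1 where "S1 = auth ` P1"
  define S2 where "S2 = auth ` P2"
  have "card S1 = card P1" unfolding S1_def
    by (rule card_image, rule inj_on_subset[OF dag1(2)]) (auto simp: P1_def)
  have "card S2 = card P2" unfolding S2_def
    by (rule card_image, rule inj_on_subset[OF dag2(2)]) (auto simp: P2_def)
  have PB1: "P1 \<subseteq> B" using dag1(1) P1_def by auto
  have PB2: "P2 \<subseteq> B" using dag2(1) P2_def by auto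
  have "\<forall>b\<in>B. auth b \<in> V" using assms(5) unfolding valid_dag_def by blast
  hence SV: "S1 \<subseteq> V" "S2 \<subseteq> V" using PB1 PB2 S1_def S2_def by auto
  have fin: "finite S1" "finite S2" using SV assms(1) finite_subset by auto
  have "card (S1 \<union> S2) \<le> card V" using SV assms(1) by (simp add: card_mono)
  moreover have "card (S1 \<union> S2) + card (S1 \<inter> S2) = card S1 + card S2"
    using card_Un_Int[OF fin] by simp
  ultimately have "f + 1 \<le> card (S1 \<inter> S2)"
    using cardP1 cardP2 \<open>card S1 = card P1\<close> \<open>card S2 = card P2\<close> assms(2) by linarith
  hence "\<not> (S1 \<inter> S2 \<subseteq> Byz)"
    using assms(4) assms(1) assms(3) card_mono[of Byz "S1 \<inter> S2"] finite_subset by fastforce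
  then obtain h where h: "h \<in> S1" "h \<in> S2" "h \<notin> Byz" by blast
  obtain p1 where p1: "p1 \<in> P1" "auth p1 = h" using h S1_def by auto
  obtain p2 where p2: "p2 \<in> P2" "auth p2 = h" using h S2_def by auto
  have "rnd p1 = rnd p2" using p1 p2 dag1(3) dag2(3) rc P1_def P2_def by fastforce
  moreover have "h \<in> V" using h SV by auto
  ultimately have "p1 = p2" using honest[of p1 p2] p1 p2 PB1 PB2 h by auto
  hence "is_vote auth rnd par p1 L1" "is_vote auth rnd par p1 L2" using p1 p2 P1_def P2_def by auto
  thus "L1 = L2" using H unfolding is_vote_def by auto
qed

end
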